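(* Let $1\le M<N$ and $\epsilon>0$, and let $F(\delta,K,N)$ denote the optimal Parseval Paulsen function. Then \[F(\epsilon,M,N)\le 8\,F\Big(\epsilon\frac{M}{N-M},\,N-M,\,N\Big).\]
   Context: $\mathcal H_K$ denotes a $K$-dimensional Hilbert space. A family $\{f_i\}_{i=1}^N$ in $\mathcal H_K$ is a Parseval frame if $\sum_{i=1}^N|\langle f,f_i\rangle|^2=\|f\|^2$ for all $f\in\mathcal H_K$; it is equal norm if all $\|f_i\|$ are equal; it is $\delta$-nearly equal norm if $(1-\delta)\frac KN\le\|f_i\|^2\le(1+\delta)\frac KN$ for all $i$. For $\mathcal F=\{f_i\}_{i=1}^N$, $\mathcal G=\{g_i\}_{i=1}^N$, $d(\mathcal F,\mathcal G)=\sum_{i=1}^N\|f_i-g_i\|^2$. The optimal Parseval Paulsen function $F(\delta,K,N)$ is the supremum, over all $\delta$-nearly equal norm Parseval frames $\mathcal F$ of $N$ vectors for $\mathcal H_K$, of $\inf\{d(\mathcal F,\mathcal G):\mathcal G\text{ an equal norm Parseval frame of }N\text{ vectors for }\mathcal H_K\}$. *)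

theory Defs
  imports Complex_Main
begin

text \<open>Vectors of the K-dimensional Hilbert space H_K = C^K are modelled as
  functions nat => complex, of which only the coordinates j < K are relevant.
  A family of N vectors is a function nat => (nat => complex), indexed by i < N.\<close>

definition vinner :: "nat \<Rightarrow> (nat \<Rightarrow> complex) \<Rightarrow> (nat \<Rightarrow> complex) \<Rightarrow> complex" where
  "vinner K f g = (\<Sum>j<K. f j * cnj (g j))"

definition vnorm2 :: "nat \<Rightarrow> (nat \<Rightarrow> complex) \<Rightarrow> real" where
  "vnorm2 K f = (\<Sum>j<K. (cmod (f j))^2)"

definition parseval_frame :: "nat \<Rightarrow> nat \<Rightarrow> (nat \<Rightarrow> nat \<Rightarrow> complex) \<Rightarrow> bool" where
  "parseval_frame K N F \<longleftrightarrow>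
     (\<forall>f. (\<Sum>i<N. (cmod (vinner K f (F i)))^2) = vnorm2 K f)"

definition equal_norm :: "nat \<Rightarrow> nat \<Rightarrow> (nat \<Rightarrow> nat \<Rightarrow> complex) \<Rightarrow> bool" where
  "equal_norm K N F \<longleftrightarrow> (\<forall>i<N. \<forall>i'<N. vnorm2 K (F i) = vnorm2 K (F i'))"

definition nearly_equal_norm :: "real \<Rightarrow> nat \<Rightarrow> nat \<Rightarrow> (nat \<Rightarrow> nat \<Rightarrow> complex) \<Rightarrow> bool" where
  "nearly_equal_norm \<delta> K N F \<longleftrightarrow>
     (\<forall>i<N. (1 - \<delta>) * real K / real N \<le> vnorm2 K (F i) \<and>
             vnorm2 K (F i) \<le> (1 + \<delta>) * real K / real N)"

definition frame_dist :: "nat \<Rightarrow> nat \<Rightarrow> (nat \<Rightarrow> nat \<Rightarrow> complex) \<Rightarrow> (nat \<Rightarrow> nat \<Rightarrow> complex) \<Rightarrow> real" where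
  "frame_dist K N F G = (\<Sum>i<N. vnorm2 K (\<lambda>j. F i j - G i j))"

definition paulsen_F :: "real \<Rightarrow> nat \<Rightarrow> nat \<Rightarrow> real" where
  "paulsen_F \<delta> K N =
     Sup {Inf {frame_dist K N F G | G. parseval_frame K N G \<and> equal_norm K N G} | F.
          parseval_frame K N F \<and> nearly_equal_norm \<delta> K N F}"

end

theory Submission
  imports Defs "Jordan_Normal_Form.Spectral_Radius"
begin


lemma vec_nonzero_ex: assumes "v \<in> carrier_vec n" "v \<noteq> 0\<^sub>v n" shows "\<exists>j<n. v $ j \<noteq> 0"
proof (rule ccontr)
  assume "\<not> ?thesis"
  hence "v = 0\<^sub>v n" using assms(1) by (intro eq_vecI) auto
  thus False using assms(2) by simp
qed

lemma raw_eig: fixes C :: "nat \<Rightarrow> nat \<Rightarrow> complex"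
  assumes "n > 0"
  shows "\<exists>\<mu> x. (\<exists>j<n. x j \<noteq> 0) \<and> (\<forall>i<n. (\<Sum>j<n. C i j * x j) = \<mu> * x i)"
proof -
  define A where "A = mat n n (\<lambda>(i,j). C i j)"
  have A: "A \<in> carrier_mat n n" unfolding A_def by simp
  from spectrum_non_empty[OF A assms] obtain \<mu> where "\<mu> \<in> spectrum A" by auto
  hence "eigenvalue A \<mu>" unfolding spectrum_def by auto
  then obtain v where ev: "eigenvector A v \<mu>" unfolding eigenvalue_def by auto
  hence v: "v \<in> carrier_vec n" "v \<noteq> 0\<^sub>v n" "A *\<^sub>v v = \<mu> \<cdot>\<^sub>v v"
    unfolding eigenvector_def using A by auto
  have "\<forall>i<n. (\<Sum>j<n. C i j * v $ j) = \<mu> * v $ i"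
  proof (intro allI impI)
    fix i assume i: "i < n"
    have "(A *\<^sub>v v) $ i = (\<mu> \<cdot>\<^sub>v v) $ i" using v(3) by simp
    also have "\<dots> = \<mu> * v $ i" using v(1) i by simp
    finally show "(\<Sum>j<n. C i j * v $ j) = \<mu> * v $ i" using i v(1) A
      by (simp add: A_def scalar_prod_def lessThan_atLeast0)
  qed
  moreover have "\<exists>j<n. v $ j \<noteq> 0" using vec_nonzero_ex v by blast
  ultimately show ?thesis by blast
qed

lemma raw_kernel: fixes u :: "nat \<Rightarrow> nat \<Rightarrow> complex"
  assumes "k < n"
  shows "\<exists>x. (\<exists>j<n. x j \<noteq> 0) \<and> (\<forall>a<k. (\<Sum>j<n. u a j * x j) = 0)"
proof -
  define c where "c = (\<lambda>i. if i < k then vec n (\<lambda>j. u i j) else 0\<^sub>v n)"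
  define A where "A = mat\<^sub>r n n (\<lambda>i. if i = n - 1 then 0\<^sub>v n else c i)"
  have A: "A \<in> carrier_mat n n" unfolding A_def by simp
  have "det A = 0" unfolding A_def using assms by (intro det_row_0) (auto simp: c_def)
  then obtain v where v: "v \<in> carrier_vec n" "v \<noteq> 0\<^sub>v n" "A *\<^sub>v v = 0\<^sub>v n"
    using det_0_iff_vec_prod_zero_field[OF A] by auto
  have "\<forall>a<k. (\<Sum>j<n. u a j * v $ j) = 0"
  proof (intro allI impI)
    fix a assume a: "a < k"
    have "(A *\<^sub>v v) $ a = 0" using v(3) a assms by simp
    moreover have "a \<noteq> n - 1" using a assms by simp
    ultimately show "(\<Sum>j<n. u a j * v $ j) = 0" using a assms v(1) A
      by (simp add: A_def c_def scalar_prod_def lessThan_atLeast0)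
  qed
  moreover have "\<exists>j<n. v $ j \<noteq> 0" using vec_nonzero_ex v by blast
  ultimately show ?thesis by blast
qed

lemma raw_inverse: fixes A B :: "nat \<Rightarrow> nat \<Rightarrow> complex"
  assumes "\<forall>i<n. \<forall>j<n. (\<Sum>k<n. A i k * B k j) = (if i = j then 1 else 0)"
  shows "\<forall>i<n. \<forall>j<n. (\<Sum>k<n. B i k * A k j) = (if i = j then 1 else 0)"
proof -
  define A' where "A' = mat n n (\<lambda>(i,j). A i j)"
  define B' where "B' = mat n n (\<lambda>(i,j). B i j)"
  have c: "A' \<in> carrier_mat n n" "B' \<in> carrier_mat n n" unfolding A'_def B'_def by auto
  have "A' * B' = 1\<^sub>m n"
    by (rule eq_matI) (use assms in \<open>auto simp: A'_def B'_def scalar_prod_def lessThan_atLeast0 row_def col_def\<close>)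
  hence "B' * A' = 1\<^sub>m n" using mat_mult_left_right_inverse c by blast
  show ?thesis
  proof (intro allI impI)
    fix i j assume ij: "i < n" "j < n"
    have "(B' * A') $$ (i,j) = (1\<^sub>m n) $$ (i,j)" using \<open>B' * A' = 1\<^sub>m n\<close> by simp
    thus "(\<Sum>k<n. B i k * A k j) = (if i = j then 1 else 0)" using ij
      by (simp add: A'_def B'_def scalar_prod_def lessThan_atLeast0 row_def col_def)
  qed
qed



definition isom :: "nat \<Rightarrow> nat \<Rightarrow> (nat \<Rightarrow> nat \<Rightarrow> complex) \<Rightarrow> bool" where
  "isom n m A \<longleftrightarrow> (\<forall>j<m. \<forall>l<m. (\<Sum>i<n. A i j * cnj (A i l)) = (if j = l then 1 else 0))"

definition onset :: "nat \<Rightarrow> nat set \<Rightarrow> (nat \<Rightarrow> nat \<Rightarrow> complex) \<Rightarrow> bool" where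
  "onset n I u \<longleftrightarrow> (\<forall>a\<in>I. \<forall>b\<in>I. vinner n (u a) (u b) = (if a = b then 1 else 0))"

lemma isom_onset: "isom n m A \<longleftrightarrow> onset n {..<m} (\<lambda>j i. A i j)"
  unfolding isom_def onset_def vinner_def by auto

lemma cn2: "complex_of_real (cmod z) ^ 2 = z * cnj z"
  by (metis complex_norm_square of_real_power)

lemma vinner_self: "vinner n x x = complex_of_real (vnorm2 n x)"
  by (simp add: vinner_def vnorm2_def cn2 of_real_sum)

lemma quad:
  "complex_of_real (\<Sum>i<N. (cmod (vinner K f (F i)))^2) =
   (\<Sum>j<K. \<Sum>l<K. f j * cnj (f l) * cnj (\<Sum>i<N. F i j * cnj (F i l)))"
proof -
  have "complex_of_real (\<Sum>i<N. (cmod (vinner K f (F i)))^2) =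
     (\<Sum>i<N. \<Sum>j<K. \<Sum>l<K. f j * cnj (f l) * (cnj (F i j) * F i l))"
    by (simp add: of_real_sum cn2 vinner_def cnj_sum sum_product mult_ac)
  also have "\<dots> = (\<Sum>j<K. \<Sum>i<N. \<Sum>l<K. f j * cnj (f l) * (cnj (F i j) * F i l))"
    by (rule sum.swap)
  also have "\<dots> = (\<Sum>j<K. \<Sum>l<K. \<Sum>i<N. f j * cnj (f l) * (cnj (F i j) * F i l))"
    by (rule sum.cong[OF refl], rule sum.swap)
  also have "\<dots> = (\<Sum>j<K. \<Sum>l<K. f j * cnj (f l) * cnj (\<Sum>i<N. F i j * cnj (F i l)))"
    by (simp add: cnj_sum sum_distrib_left mult_ac)
  finally show ?thesis .
qed

lemma sum_delta_lt: "j < (K::nat) \<Longrightarrow> (\<Sum>l<K. (if j = l then g l else 0)) = (g j :: 'a::comm_monoid_add)"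
  by (simp add: sum.delta)

lemma sum_delta_lt': "j < (K::nat) \<Longrightarrow> (\<Sum>l<K. (if l = j then g l else 0)) = (g j :: 'a::comm_monoid_add)"
  by (simp add: sum.delta')

lemma isom_parseval: assumes "isom N K F" shows "parseval_frame K N F"
  unfolding parseval_frame_def
proof
  fix f
  have "complex_of_real (\<Sum>i<N. (cmod (vinner K f (F i)))^2) =
     (\<Sum>j<K. \<Sum>l<K. f j * cnj (f l) * cnj (if j = l then 1 else 0))"
    unfolding quad using assms unfolding isom_def by (intro sum.cong refl) auto
  also have "\<dots> = (\<Sum>j<K. f j * cnj (f j))"
    by (intro sum.cong refl) (simp add: if_distrib sum.delta cong: if_cong)
  also have "\<dots> = complex_of_real (vnorm2 K f)"
    using vinner_self[of K f] by (simp add: vinner_def)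
  finally show "(\<Sum>i<N. (cmod (vinner K f (F i)))^2) = vnorm2 K f" using of_real_eq_iff by blast
qed



lemma sum_two: fixes g :: "nat \<Rightarrow> 'a::comm_monoid_add"
  assumes "a < K" "b < K" "a \<noteq> b" "\<And>j. j \<noteq> a \<Longrightarrow> j \<noteq> b \<Longrightarrow> g j = 0"
  shows "(\<Sum>j<K. g j) = g a + g b"
proof -
  have "(\<Sum>j<K. g j) = (\<Sum>j\<in>{a,b}. g j)"
    using assms by (intro sum.mono_neutral_right) auto
  thus ?thesis using assms(3) by simp
qed

lemma sum_one: fixes g :: "nat \<Rightarrow> 'a::comm_monoid_add"
  assumes "a < K" "\<And>j. j \<noteq> a \<Longrightarrow> g j = 0"
  shows "(\<Sum>j<K. g j) = g a"
proof -
  have "(\<Sum>j<K. g j) = (\<Sum>j\<in>{a}. g j)"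
    using assms by (intro sum.mono_neutral_right) auto
  thus ?thesis by simp
qed

lemma parseval_quad: assumes "parseval_frame K N F"
  shows "(\<Sum>j<K. \<Sum>l<K. f j * cnj (f l) * cnj (\<Sum>i<N. F i j * cnj (F i l))) = (\<Sum>j<K. f j * cnj (f j))"
proof -
  have "(\<Sum>j<K. \<Sum>l<K. f j * cnj (f l) * cnj (\<Sum>i<N. F i j * cnj (F i l)))
      = complex_of_real (vnorm2 K f)" using assms unfolding parseval_frame_def quad[symmetric] by metis
  also have "\<dots> = (\<Sum>j<K. f j * cnj (f j))" using vinner_self[of K f] by (simp add: vinner_def)
  finally show ?thesis .
qed

lemma parseval_isom: assumes P: "parseval_frame K N F" shows "isom N K F"
proof -
  define G where "G = (\<lambda>j l. (\<Sum>i<N. F i j * cnj (F i l)))"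
  have Q: "\<And>f. (\<Sum>j<K. \<Sum>l<K. f j * cnj (f l) * cnj (G j l)) = (\<Sum>j<K. f j * cnj (f j))"
    using parseval_quad[OF P] unfolding G_def by blast
  have diag: "G a a = 1" if a: "a < K" for a
  proof -
    define f where "f = (\<lambda>j. if j = a then (1::complex) else 0)"
    have "(\<Sum>j<K. \<Sum>l<K. f j * cnj (f l) * cnj (G j l)) = cnj (G a a)"
      apply (subst sum_one[OF a]) apply (simp add: f_def)
      apply (subst sum_one[OF a]) apply (simp add: f_def)
      by (simp add: f_def)
    moreover have "(\<Sum>j<K. f j * cnj (f j)) = 1"
      by (subst sum_one[OF a]) (simp_all add: f_def)
    ultimately have "cnj (G a a) = 1" using Q[of f] by simp
    thus ?thesis by (metis complex_cnj_cnj complex_cnj_one)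
  qed
  have two: "cnj c * cnj (G a b) + c * cnj (G b a) = 0"
    if ab: "a < K" "b < K" "a \<noteq> b" for a b c
  proof -
    define f where "f = (\<lambda>j. if j = a then (1::complex) else if j = b then c else 0)"
    have "(\<Sum>j<K. \<Sum>l<K. f j * cnj (f l) * cnj (G j l))
       = (f a * cnj (f a) * cnj (G a a) + f a * cnj (f b) * cnj (G a b))
       + (f b * cnj (f a) * cnj (G b a) + f b * cnj (f b) * cnj (G b b))"
      apply (subst sum_two[OF ab]) apply (simp add: f_def)
      apply (subst sum_two[OF ab]) apply (simp add: f_def)
      by simp
    also have "\<dots> = 1 + cnj c * cnj (G a b) + c * cnj (G b a) + c * cnj c"
      using diag ab by (simp add: f_def)
    finally have 1: "(\<Sum>j<K. \<Sum>l<K. f j * cnj (f l) * cnj (G j l)) = 1 + cnj c * cnj (G a b) + c * cnj (G b a) + c * cnj c" .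
    have 2: "(\<Sum>j<K. f j * cnj (f j)) = 1 + c * cnj c"
      by (subst sum_two[OF ab]) (use ab in \<open>simp_all add: f_def\<close>)
    show ?thesis using Q[of f] 1 2 by simp
  qed
  have off: "G a b = 0" if ab: "a < K" "b < K" "a \<noteq> b" for a b
  proof -
    have e1: "cnj (G a b) + cnj (G b a) = 0" using two[OF ab, of 1] by simp
    have e2: "- \<i> * cnj (G a b) + \<i> * cnj (G b a) = 0" using two[OF ab, of \<i>] by simp
    from e2 have "\<i> * (cnj (G b a) - cnj (G a b)) = 0" by (simp add: algebra_simps)
    hence "cnj (G b a) = cnj (G a b)" by simp
    with e1 have "cnj (G a b) = 0" by simp
    thus ?thesis by simp
  qed
  show ?thesis unfolding isom_def using diag off unfolding G_def by auto
qed

lemma parseval_iff: "parseval_frame K N F \<longleftrightarrow> isom N K F"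
  using parseval_isom isom_parseval by blast



lemma isom_square: assumes "isom n n A"
  shows "\<forall>i<n. \<forall>i'<n. (\<Sum>j<n. A i j * cnj (A i' j)) = (if i = i' then 1 else 0)"
proof -
  have "\<forall>i<n. \<forall>j<n. (\<Sum>k<n. cnj (A k i) * A k j) = (if i = j then 1 else 0)"
  proof (intro allI impI)
    fix i j assume "i < n" "j < n"
    hence "(\<Sum>k<n. A k i * cnj (A k j)) = (if i = j then 1 else 0)" using assms unfolding isom_def by auto
    hence "cnj (\<Sum>k<n. A k i * cnj (A k j)) = (if i = j then 1 else 0)" by simp
    thus "(\<Sum>k<n. cnj (A k i) * A k j) = (if i = j then 1 else 0)" by (simp add: cnj_sum mult_ac)
  qed
  from raw_inverse[OF this] show ?thesis by (simp add: mult_ac)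
qed

lemma vinner_cnj: "vinner n a b = cnj (vinner n b a)"
  by (simp add: vinner_def cnj_sum mult.commute)

lemma vinner_scale: "vinner n (\<lambda>j. c * x j) z = c * vinner n x z"
  by (simp add: vinner_def sum_distrib_left mult_ac)

lemma vinner_scale2: "vinner n z (\<lambda>j. c * x j) = cnj c * vinner n z x"
  by (simp add: vinner_def sum_distrib_left mult_ac)

lemma vnorm2_nonneg: "vnorm2 n x \<ge> 0"
  unfolding vnorm2_def by (intro sum_nonneg) auto

lemma vnorm2_pos: assumes "j < n" "x j \<noteq> 0" shows "vnorm2 n x > 0"
proof -
  have "(cmod (x j))^2 \<le> vnorm2 n x" unfolding vnorm2_def
    using assms by (intro member_le_sum) auto
  moreover have "(cmod (x j))^2 > 0" using assms by simp
  ultimately show ?thesis by linarith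
qed

lemma vnorm2_zero: assumes "vnorm2 n x = 0" "j < n" shows "x j = 0"
  using vnorm2_pos[of j n x] assms by force

lemma normalize_vec: assumes "vnorm2 n x > 0"
  defines "y \<equiv> (\<lambda>j. complex_of_real (1 / sqrt (vnorm2 n x)) * x j)"
  shows "vinner n y y = 1" "\<And>z. vinner n x z = 0 \<Longrightarrow> vinner n y z = 0"
proof -
  let ?s = "vnorm2 n x"
  have "vinner n y y = complex_of_real ((1 / sqrt ?s) * (1 / sqrt ?s) * ?s)"
    unfolding y_def vinner_scale vinner_scale2 vinner_self
    by (simp only: complex_cnj_complex_of_real of_real_mult mult.assoc)
  also have "(1 / sqrt ?s) * (1 / sqrt ?s) * ?s = 1" using assms
  proof -
    have "sqrt ?s * sqrt ?s = ?s" using assms by simp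
    moreover have "sqrt ?s > 0" using assms by simp
    ultimately show ?thesis by (simp add: field_simps)
  qed
  finally show "vinner n y y = 1" by simp
  fix z assume "vinner n x z = 0" thus "vinner n y z = 0" unfolding y_def vinner_scale by simp
qed

lemma orth_vec: assumes "finite I" "card I < n"
  shows "\<exists>y. vinner n y y = 1 \<and> (\<forall>b\<in>I. vinner n y (u b) = 0)"
proof -
  obtain h where h: "bij_betw h {0..<card I} I" using ex_bij_betw_nat_finite[OF assms(1)] by blast
  obtain x where x: "\<exists>j<n. x j \<noteq> 0" "\<forall>a<card I. (\<Sum>j<n. cnj (u (h a) j) * x j) = 0"
    using raw_kernel[OF assms(2), of "\<lambda>a j. cnj (u (h a) j)"] by blast
  have orth: "vinner n x (u b) = 0" if b: "b \<in> I" for b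
  proof -
    have "b \<in> h ` {0..<card I}" using h b by (simp add: bij_betw_def)
    then obtain a where a: "a < card I" "b = h a" by auto
    show ?thesis using x(2) a unfolding vinner_def by (simp add: mult_ac)
  qed
  have pos: "vnorm2 n x > 0" using x(1) vnorm2_pos by blast
  show ?thesis using normalize_vec[OF pos] orth by blast
qed

lemma completion:
  assumes "finite D" "finite S" "D \<inter> S = {}" "card (S \<union> D) \<le> n" "onset n S u"
  shows "\<exists>w. onset n (S \<union> D) w \<and> (\<forall>a\<in>S. w a = u a)"
  using assms
proof (induction D rule: finite_induct)
  case empty thus ?case by auto
next
  case (insert d D)
  have "card (S \<union> D) \<le> n" using insert
    by (metis card_mono finite_Un finite_insert le_trans subset_insertI Un_insert_right)
  then obtain w where w: "onset n (S \<union> D) w" "\<forall>a\<in>S. w a = u a" using insert by auto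
  have dn: "d \<notin> S \<union> D" using insert by auto
  have "card (insert d (S \<union> D)) = Suc (card (S \<union> D))" using dn insert by simp
  hence lt: "card (S \<union> D) < n" using insert(6) by simp
  obtain y where y: "vinner n y y = 1" "\<forall>b\<in>S \<union> D. vinner n y (w b) = 0"
    using orth_vec[OF _ lt, of w] insert by auto
  define w' where "w' = w(d := y)"
  have "onset n (S \<union> insert d D) w'"
    unfolding onset_def
  proof (intro ballI)
    fix a b assume ab: "a \<in> S \<union> insert d D" "b \<in> S \<union> insert d D"
    show "vinner n (w' a) (w' b) = (if a = b then 1 else 0)"
    proof (cases "a = d"; cases "b = d")
      assume "a = d" "b = d" thus ?thesis using y by (simp add: w'_def)
    next
      assume "a = d" "b \<noteq> d" thus ?thesis using y ab by (simp add: w'_def)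
    next
      assume "a \<noteq> d" "b = d"
      hence "a \<in> S \<union> D" using ab by auto
      hence "vinner n y (w a) = 0" using y(2) by blast
      hence "vinner n (w a) y = 0" by (subst vinner_cnj) simp
      thus ?thesis using \<open>a \<noteq> d\<close> \<open>b = d\<close> by (simp add: w'_def)
    next
      assume "a \<noteq> d" "b \<noteq> d"
      thus ?thesis using w(1) ab unfolding onset_def by (simp add: w'_def)
    qed
  qed
  moreover have "\<forall>a\<in>S. w' a = u a" using w(2) dn by (auto simp: w'_def)
  ultimately show ?case by blast
qed



lemma sum_split: "(\<Sum>i<(m::nat)+n. f i) = (\<Sum>i<m. f i) + (\<Sum>i<n. f (m+i))"
  by (induction n) (simp_all add: add.assoc)

lemma complete_isom: assumes "isom N M P" "M \<le> N"
  shows "\<exists>W. isom N N W \<and> (\<forall>i j. j < M \<longrightarrow> W i j = P i j)"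
proof -
  have on: "onset N {..<M} (\<lambda>j i. P i j)" using assms(1) isom_onset by blast
  have u: "{..<M} \<union> {M..<N} = {..<N}" using assms(2) by auto
  have c: "card ({..<M} \<union> {M..<N}) \<le> N" unfolding u by simp
  have d: "{M..<N} \<inter> {..<M} = {}" by auto
  obtain w where w: "onset N ({..<M} \<union> {M..<N}) w" "\<forall>a\<in>{..<M}. w a = (\<lambda>i. P i a)"
    using completion[of "{M..<N}" "{..<M}" N "\<lambda>j i. P i j", OF _ _ d c on] by auto
  have "isom N N (\<lambda>i j. w j i)" using w(1) unfolding u isom_onset by simp
  moreover have "\<forall>i j. j < M \<longrightarrow> w j i = P i j" using w(2) by auto
  ultimately show ?thesis by blast
qed

lemma expansion: assumes "onset n {..<n} w" "i < n"
  shows "y i = (\<Sum>b<n. vinner n y (w b) * w b i)"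
proof -
  have sq: "\<forall>i<n. \<forall>i'<n. (\<Sum>b<n. w b i * cnj (w b i')) = (if i = i' then 1 else 0)"
    using isom_square[of n "\<lambda>i b. w b i"] assms(1) isom_onset by auto
  have "(\<Sum>b<n. vinner n y (w b) * w b i) = (\<Sum>b<n. \<Sum>j<n. y j * (w b i * cnj (w b j)))"
    by (simp add: vinner_def sum_distrib_left mult_ac)
  also have "\<dots> = (\<Sum>j<n. \<Sum>b<n. y j * (w b i * cnj (w b j)))" by (rule sum.swap)
  also have "\<dots> = (\<Sum>j<n. y j * (if i = j then 1 else 0))"
    by (intro sum.cong refl) (use sq assms(2) in \<open>simp add: sum_distrib_left[symmetric]\<close>)
  also have "\<dots> = y i" using assms(2) by (simp add: if_distrib sum.delta cong: if_cong)
  finally show ?thesis by simp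
qed

lemma complement: assumes "isom N M P" "M \<le> N"
  shows "\<exists>Q. isom N (N - M) Q \<and> (\<forall>i<N. \<forall>i'<N.
     (\<Sum>j<M. P i j * cnj (P i' j)) + (\<Sum>j<N-M. Q i j * cnj (Q i' j)) = (if i = i' then 1 else 0))"
proof -
  obtain W where W: "isom N N W" "\<forall>i j. j < M \<longrightarrow> W i j = P i j" using complete_isom[OF assms] by blast
  define Q where "Q = (\<lambda>i j. W i (M + j))"
  have NM: "M + (N - M) = N" using assms(2) by simp
  have "isom N (N - M) Q" unfolding isom_def Q_def
  proof (intro allI impI)
    fix j l assume "j < N - M" "l < N - M"
    hence "M + j < N" "M + l < N" by auto
    thus "(\<Sum>i<N. W i (M + j) * cnj (W i (M + l))) = (if j = l then 1 else 0)"
      using W(1) unfolding isom_def by auto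
  qed
  moreover have "\<forall>i<N. \<forall>i'<N.
     (\<Sum>j<M. P i j * cnj (P i' j)) + (\<Sum>j<N-M. Q i j * cnj (Q i' j)) = (if i = i' then 1 else 0)"
  proof (intro allI impI)
    fix i i' assume ii: "i < N" "i' < N"
    have "(\<Sum>j<N. W i j * cnj (W i' j)) = (if i = i' then 1 else 0)" using isom_square[OF W(1)] ii by auto
    moreover have "(\<Sum>j<N. W i j * cnj (W i' j)) = (\<Sum>j<M. W i j * cnj (W i' j)) + (\<Sum>j<N-M. Q i j * cnj (Q i' j))"
    proof -
      have "(\<Sum>j<N. W i j * cnj (W i' j)) = (\<Sum>j<M + (N - M). W i j * cnj (W i' j))"
        by (simp only: NM)
      also have "\<dots> = (\<Sum>j<M. W i j * cnj (W i' j)) + (\<Sum>j<N-M. Q i j * cnj (Q i' j))"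
        by (simp only: sum_split Q_def)
      finally show ?thesis .
    qed
    moreover have "(\<Sum>j<M. W i j * cnj (W i' j)) = (\<Sum>j<M. P i j * cnj (P i' j))" using W(2) by simp
    ultimately show "(\<Sum>j<M. P i j * cnj (P i' j)) + (\<Sum>j<N-M. Q i j * cnj (Q i' j)) = (if i = i' then 1 else 0)" by simp
  qed
  ultimately show ?thesis by blast
qed

definition Hv :: "nat \<Rightarrow> (nat \<Rightarrow> nat \<Rightarrow> complex) \<Rightarrow> (nat \<Rightarrow> complex) \<Rightarrow> nat \<Rightarrow> complex" where
  "Hv n H x = (\<lambda>i. \<Sum>j<n. H i j * x j)"

lemma herm_vinner: assumes "\<forall>i<n. \<forall>j<n. H j i = cnj (H i j)"
  shows "vinner n (Hv n H z) u = vinner n z (Hv n H u)"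
proof -
  have "vinner n (Hv n H z) u = (\<Sum>i<n. \<Sum>j<n. H i j * z j * cnj (u i))"
    by (simp add: vinner_def Hv_def sum_distrib_right)
  also have "\<dots> = (\<Sum>j<n. \<Sum>i<n. H i j * z j * cnj (u i))" by (rule sum.swap)
  also have "\<dots> = (\<Sum>j<n. \<Sum>i<n. z j * (cnj (H j i) * cnj (u i)))"
  proof (intro sum.cong refl)
    fix j i assume "j \<in> {..<n}" "i \<in> {..<n}"
    hence h: "H i j = cnj (H j i)" using assms by (meson lessThan_iff)
    show "H i j * z j * cnj (u i) = z j * (cnj (H j i) * cnj (u i))" unfolding h by (simp only: mult_ac)
  qed
  also have "\<dots> = vinner n z (Hv n H u)"
    by (simp add: vinner_def Hv_def sum_distrib_left cnj_sum)
  finally show ?thesis .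
qed

lemma Hv_sum: "Hv n H (\<lambda>j. \<Sum>q\<in>A. f q j) i = (\<Sum>q\<in>A. Hv n H (f q) i)"
  unfolding Hv_def by (simp add: sum_distrib_left) (rule sum.swap)

lemma Hv_scale: "Hv n H (\<lambda>j. c * f j) i = c * Hv n H f i"
  unfolding Hv_def by (simp add: sum_distrib_left mult_ac)

lemma vinner_sum_left: "vinner n (\<lambda>i. \<Sum>q\<in>A. f q i) z = (\<Sum>q\<in>A. vinner n (f q) z)"
  unfolding vinner_def by (simp add: sum_distrib_right) (rule sum.swap)

lemma vinner_sum_right: "vinner n z (\<lambda>i. \<Sum>q\<in>A. f q i) = (\<Sum>q\<in>A. vinner n z (f q))"
  unfolding vinner_def by (simp add: sum_distrib_left cnj_sum) (rule sum.swap)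



lemma spectral_step:
  assumes herm: "\<forall>i<n. \<forall>j<n. H j i = cnj (H i j)"
    and k: "k < n"
    and v: "onset n {..<k} v" "\<forall>a<k. \<forall>i<n. Hv n H (v a) i = ev a * v a i"
  shows "\<exists>y \<mu>. vinner n y y = 1 \<and> (\<forall>a<k. vinner n y (v a) = 0) \<and> (\<forall>i<n. Hv n H y i = \<mu> * y i)"
proof -
  have d: "{k..<n} \<inter> {..<k} = {}" by auto
  have u: "{..<k} \<union> {k..<n} = {..<n}" using k by auto
  have c: "card ({..<k} \<union> {k..<n}) \<le> n" unfolding u by simp
  obtain w where w0: "onset n ({..<k} \<union> {k..<n}) w" and wv: "\<forall>a\<in>{..<k}. w a = v a"
    using completion[of "{k..<n}" "{..<k}" n v, OF _ _ d c v(1)] by auto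
  have w: "onset n {..<n} w" using w0 u by simp
  have wo: "vinner n (w a) (w b) = (if a = b then 1 else 0)" if "a < n" "b < n" for a b
    using w that unfolding onset_def by auto
  define m where "m = n - k"
  have m: "m > 0" "k + m = n" using k unfolding m_def by auto
  define C where "C = (\<lambda>p q. vinner n (Hv n H (w (k + q))) (w (k + p)))"
  obtain \<mu> x where x: "\<exists>q<m. x q \<noteq> 0" "\<forall>p<m. (\<Sum>q<m. C p q * x q) = \<mu> * x p"
    using raw_eig[OF m(1), of C] by blast
  define y where "y = (\<lambda>i. \<Sum>q<m. x q * w (k + q) i)"
  have Hw: "Hv n H (w (k + q)) i = (\<Sum>p<m. C p q * w (k + p) i)" if q: "q < m" and i: "i < n" for q i
  proof -
    have "Hv n H (w (k + q)) i = (\<Sum>b<n. vinner n (Hv n H (w (k + q))) (w b) * w b i)"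
      by (rule expansion[OF w i])
    also have "\<dots> = (\<Sum>b<k. vinner n (Hv n H (w (k + q))) (w b) * w b i)
                   + (\<Sum>p<m. vinner n (Hv n H (w (k + q))) (w (k + p)) * w (k + p) i)"
      by (subst m(2)[symmetric], subst sum_split) (rule refl)
    also have "(\<Sum>b<k. vinner n (Hv n H (w (k + q))) (w b) * w b i) = 0"
    proof (intro sum.neutral ballI)
      fix b assume b: "b \<in> {..<k}"
      have "vinner n (Hv n H (w (k + q))) (w b) = vinner n (w (k + q)) (Hv n H (w b))"
        by (rule herm_vinner[OF herm])
      also have "vinner n (w (k + q)) (Hv n H (w b)) = vinner n (w (k + q)) (\<lambda>i. ev b * w b i)"
        unfolding vinner_def using v(2) wv b by (intro sum.cong refl) auto
      also have "vinner n (w (k + q)) (\<lambda>i. ev b * w b i) = cnj (ev b) * vinner n (w (k + q)) (w b)"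
        by (rule vinner_scale2)
      also have "vinner n (w (k + q)) (w b) = 0" using wo[of "k+q" b] b q m by auto
      finally show "vinner n (Hv n H (w (k + q))) (w b) * w b i = 0" by simp
    qed
    finally show ?thesis unfolding C_def by simp
  qed
  have eig: "Hv n H y i = \<mu> * y i" if i: "i < n" for i
  proof -
    have "Hv n H y i = (\<Sum>q<m. x q * Hv n H (w (k + q)) i)"
      unfolding y_def Hv_sum Hv_scale by (rule refl)
    also have "\<dots> = (\<Sum>q<m. x q * (\<Sum>p<m. C p q * w (k + p) i))"
      using Hw i by simp
    also have "\<dots> = (\<Sum>q<m. \<Sum>p<m. C p q * x q * w (k + p) i)"
      by (simp add: sum_distrib_left mult_ac)
    also have "\<dots> = (\<Sum>p<m. \<Sum>q<m. C p q * x q * w (k + p) i)" by (rule sum.swap)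
    also have "\<dots> = (\<Sum>p<m. (\<Sum>q<m. C p q * x q) * w (k + p) i)"
      by (simp add: sum_distrib_right)
    also have "\<dots> = (\<Sum>p<m. \<mu> * x p * w (k + p) i)" using x(2) by simp
    also have "\<dots> = \<mu> * y i" unfolding y_def by (simp add: sum_distrib_left mult_ac)
    finally show ?thesis .
  qed
  have orth: "vinner n y (v a) = 0" if a: "a < k" for a
  proof -
    have "vinner n y (v a) = (\<Sum>q<m. x q * vinner n (w (k + q)) (w a))"
      unfolding y_def vinner_sum_left vinner_scale using wv a by simp
    also have "\<dots> = 0" using wo a m by (intro sum.neutral) auto
    finally show ?thesis .
  qed
  have yy: "vinner n y y = (\<Sum>q<m. x q * cnj (x q))"
  proof -
    have "vinner n y y = (\<Sum>q<m. \<Sum>q'<m. x q * cnj (x q') * vinner n (w (k + q)) (w (k + q')))"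
      unfolding y_def vinner_sum_left vinner_sum_right vinner_scale vinner_scale2
      by (simp add: sum_distrib_left mult_ac)
    also have "\<dots> = (\<Sum>q<m. \<Sum>q'<m. x q * cnj (x q') * (if q = q' then 1 else 0))"
      using wo m by (intro sum.cong refl) auto
    also have "\<dots> = (\<Sum>q<m. x q * cnj (x q))"
      by (intro sum.cong refl) (simp add: if_distrib sum.delta cong: if_cong)
    finally show ?thesis .
  qed
  have "vinner n y y = complex_of_real (vnorm2 m x)"
    unfolding yy using vinner_self[of m x] by (simp add: vinner_def)
  moreover have "vnorm2 m x > 0" using x(1) vnorm2_pos by blast
  ultimately have pos: "vnorm2 n y > 0" using vinner_self[of n y] by simp
  define y' where "y' = (\<lambda>j. complex_of_real (1 / sqrt (vnorm2 n y)) * y j)"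
  have "vinner n y' y' = 1" "\<forall>a<k. vinner n y' (v a) = 0"
    using normalize_vec[OF pos] orth unfolding y'_def by auto
  moreover have "\<forall>i<n. Hv n H y' i = \<mu> * y' i" unfolding y'_def Hv_scale using eig by simp
  ultimately show ?thesis by blast
qed

lemma spectral_k:
  assumes herm: "\<forall>i<n. \<forall>j<n. H j i = cnj (H i j)"
  shows "k \<le> n \<Longrightarrow> \<exists>v ev. onset n {..<k} v \<and> (\<forall>a<k. \<forall>i<n. Hv n H (v a) i = ev a * v a i)"
proof (induction k)
  case 0 thus ?case by (auto simp: onset_def)
next
  case (Suc k)
  then obtain v ev where v: "onset n {..<k} v" "\<forall>a<k. \<forall>i<n. Hv n H (v a) i = ev a * v a i" by auto
  have k: "k < n" using Suc by simp
  obtain y \<mu> where y: "vinner n y y = 1" "\<forall>a<k. vinner n y (v a) = 0" "\<forall>i<n. Hv n H y i = \<mu> * y i"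
    using spectral_step[OF herm k v] by blast
  define v' where "v' = v(k := y)"
  define ev' where "ev' = ev(k := \<mu>)"
  have "onset n {..<Suc k} v'" unfolding onset_def
  proof (intro ballI)
    fix a b assume ab: "a \<in> {..<Suc k}" "b \<in> {..<Suc k}"
    show "vinner n (v' a) (v' b) = (if a = b then 1 else 0)"
    proof (cases "a = k"; cases "b = k")
      assume "a = k" "b = k" thus ?thesis using y by (simp add: v'_def)
    next
      assume "a = k" "b \<noteq> k" thus ?thesis using y ab by (simp add: v'_def)
    next
      assume "a \<noteq> k" "b = k"
      hence "vinner n y (v a) = 0" using y(2) ab by auto
      hence "vinner n (v a) y = 0" by (subst vinner_cnj) simp
      thus ?thesis using \<open>a \<noteq> k\<close> \<open>b = k\<close> by (simp add: v'_def)
    next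
      assume "a \<noteq> k" "b \<noteq> k"
      thus ?thesis using v(1) ab unfolding onset_def by (simp add: v'_def)
    qed
  qed
  moreover have "\<forall>a<Suc k. \<forall>i<n. Hv n H (v' a) i = ev' a * v' a i"
    using v(2) y(3) by (auto simp: v'_def ev'_def less_Suc_eq)
  ultimately show ?case by blast
qed

lemma spectral:
  assumes herm: "\<forall>i<n. \<forall>j<n. H j i = cnj (H i j)"
  shows "\<exists>v ev. onset n {..<n} v \<and> (\<forall>a<n. \<forall>i<n. Hv n H (v a) i = ev a * v a i)"
  using spectral_k[OF herm, of n] by simp



lemma isom_mult: assumes "isom n m A" "isom m k B"
  shows "isom n k (\<lambda>i q. \<Sum>p<m. A i p * B p q)"
  unfolding isom_def
proof (intro allI impI)
  fix q q' assume q: "q < k" "q' < k"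
  have "(\<Sum>i<n. (\<Sum>p<m. A i p * B p q) * cnj (\<Sum>p<m. A i p * B p q'))
      = (\<Sum>i<n. \<Sum>p<m. \<Sum>p'<m. B p q * cnj (B p' q') * (A i p * cnj (A i p')))"
    by (simp add: sum_product cnj_sum mult_ac)
  also have "\<dots> = (\<Sum>p<m. \<Sum>i<n. \<Sum>p'<m. B p q * cnj (B p' q') * (A i p * cnj (A i p')))"
    by (rule sum.swap)
  also have "\<dots> = (\<Sum>p<m. \<Sum>p'<m. \<Sum>i<n. B p q * cnj (B p' q') * (A i p * cnj (A i p')))"
    by (rule sum.cong[OF refl], rule sum.swap)
  also have "\<dots> = (\<Sum>p<m. \<Sum>p'<m. B p q * cnj (B p' q') * (if p = p' then 1 else 0))"
    using assms(1) unfolding isom_def by (intro sum.cong refl) (simp add: sum_distrib_left[symmetric])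
  also have "\<dots> = (\<Sum>p<m. B p q * cnj (B p q'))"
    by (intro sum.cong refl) (simp add: if_distrib sum.delta cong: if_cong)
  also have "\<dots> = (if q = q' then 1 else 0)" using assms(2) q unfolding isom_def by auto
  finally show "(\<Sum>i<n. (\<Sum>p<m. A i p * B p q) * cnj (\<Sum>p<m. A i p * B p q')) = (if q = q' then 1 else 0)" .
qed

lemma isom_rows_cnj: assumes "isom K K U"
  shows "isom K K (\<lambda>q p. cnj (U p q))"
  unfolding isom_def
proof (intro allI impI)
  fix p p' assume "p < K" "p' < K"
  hence "(\<Sum>q<K. U p q * cnj (U p' q)) = (if p = p' then 1 else 0)" using isom_square[OF assms] by auto
  hence "cnj (\<Sum>q<K. U p q * cnj (U p' q)) = (if p = p' then 1 else 0)" by simp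
  thus "(\<Sum>q<K. cnj (U p q) * cnj (cnj (U p' q))) = (if p = p' then 1 else 0)" by (simp add: cnj_sum)
qed

lemma rownorm_pres: assumes "isom K K U"
  shows "vnorm2 K (\<lambda>q. \<Sum>p<K. x p * U p q) = vnorm2 K x"
proof -
  have P: "parseval_frame K K (\<lambda>q p. cnj (U p q))" using isom_parseval isom_rows_cnj assms by blast
  have "vnorm2 K (\<lambda>q. \<Sum>p<K. x p * U p q) = (\<Sum>q<K. (cmod (vinner K x (\<lambda>p. cnj (U p q))))^2)"
    unfolding vnorm2_def vinner_def by simp
  also have "\<dots> = vnorm2 K x" using P unfolding parseval_frame_def by blast
  finally show ?thesis .
qed

lemma isom_norm: assumes "isom N K P"
  shows "vnorm2 N (\<lambda>i. \<Sum>q<K. P i q * x q) = vnorm2 K x"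
proof -
  have Pf: "parseval_frame K N P" using isom_parseval assms by blast
  have "vnorm2 N (\<lambda>i. \<Sum>q<K. P i q * x q) = (\<Sum>i<N. (cmod (vinner K (\<lambda>q. cnj (x q)) (P i)))^2)"
  proof -
    have "\<And>i. cmod (\<Sum>q<K. P i q * x q) = cmod (vinner K (\<lambda>q. cnj (x q)) (P i))"
    proof -
      fix i
      have "vinner K (\<lambda>q. cnj (x q)) (P i) = cnj (\<Sum>q<K. P i q * x q)"
        unfolding vinner_def cnj_sum complex_cnj_mult complex_cnj_cnj by (simp add: mult.commute)
      thus "cmod (\<Sum>q<K. P i q * x q) = cmod (vinner K (\<lambda>q. cnj (x q)) (P i))" by (metis complex_mod_cnj)
    qed
    thus ?thesis unfolding vnorm2_def by simp
  qed
  also have "\<dots> = vnorm2 K (\<lambda>q. cnj (x q))" using Pf unfolding parseval_frame_def by blast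
  also have "\<dots> = vnorm2 K x" unfolding vnorm2_def by simp
  finally show ?thesis .
qed

lemma bessel: assumes "isom N K B" "K \<le> N"
  shows "(\<Sum>p<K. (cmod (vinner N y (\<lambda>i. B i p)))^2) \<le> vnorm2 N y"
proof -
  obtain W where W: "isom N N W" "\<forall>i j. j < K \<longrightarrow> W i j = B i j" using complete_isom[OF assms] by blast
  have "isom N N (\<lambda>p i. W i p)" using isom_square[OF W(1)] unfolding isom_def by auto
  hence P: "parseval_frame N N (\<lambda>p i. W i p)" using isom_parseval by blast
  have "(\<Sum>p<K. (cmod (vinner N y (\<lambda>i. B i p)))^2) = (\<Sum>p<K. (cmod (vinner N y (\<lambda>i. W i p)))^2)"
    using W(2) by simp
  also have "\<dots> \<le> (\<Sum>p<N. (cmod (vinner N y (\<lambda>i. W i p)))^2)"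
    using assms(2) by (intro sum_mono2) auto
  also have "\<dots> = vnorm2 N y" using P unfolding parseval_frame_def by blast
  finally show ?thesis .
qed

lemma rows_sum: assumes "isom N K P" shows "(\<Sum>i<N. vnorm2 K (P i)) = real K"
proof -
  have "complex_of_real (\<Sum>i<N. vnorm2 K (P i)) = (\<Sum>i<N. \<Sum>j<K. P i j * cnj (P i j))"
    by (simp add: vnorm2_def of_real_sum cn2)
  also have "\<dots> = (\<Sum>j<K. \<Sum>i<N. P i j * cnj (P i j))" by (rule sum.swap)
  also have "\<dots> = (\<Sum>j<K. 1)" using assms unfolding isom_def by simp
  also have "\<dots> = complex_of_real (real K)" by simp
  finally show ?thesis by (simp only: of_real_eq_iff)
qed

lemma cmod_diff_sq: "(cmod (a - b))^2 = (cmod a)^2 + (cmod b)^2 - 2 * Re (a * cnj b)"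
proof -
  have "complex_of_real ((cmod (a - b))^2) = (a - b) * cnj (a - b)" by (rule complex_norm_square)
  also have "\<dots> = a * cnj a + b * cnj b - (a * cnj b + cnj (a * cnj b))" by (simp add: algebra_simps)
  also have "\<dots> = complex_of_real ((cmod a)^2) + complex_of_real ((cmod b)^2) - complex_of_real (2 * Re (a * cnj b))"
    by (simp only: complex_norm_square complex_add_cnj)
  also have "\<dots> = complex_of_real ((cmod a)^2 + (cmod b)^2 - 2 * Re (a * cnj b))"
    by (simp only: of_real_add of_real_diff)
  finally show ?thesis by (simp only: of_real_eq_iff)
qed

lemma cmod_add_le: "(cmod (a + b))^2 \<le> 2 * (cmod a)^2 + 2 * (cmod b)^2"
proof -
  have "cmod (a + b) \<le> cmod a + cmod b" by (rule norm_triangle_ineq)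
  hence "(cmod (a + b))^2 \<le> (cmod a + cmod b)^2" by (intro power_mono) auto
  also have "\<dots> \<le> 2 * (cmod a)^2 + 2 * (cmod b)^2"
    using sum_squares_bound[of "cmod a" "cmod b"] by (simp add: power2_eq_square algebra_simps)
  finally show ?thesis .
qed



lemma cmod_diff_le: "(cmod (a - b))^2 \<le> 2 * (cmod a)^2 + 2 * (cmod b)^2"
  using cmod_add_le[of a "- b"] by simp

lemma dist_formula: assumes "isom N K F" "isom N K G"
  shows "frame_dist K N F G = 2 * real K - 2 * Re (\<Sum>i<N. \<Sum>j<K. F i j * cnj (G i j))"
proof -
  have "frame_dist K N F G = (\<Sum>i<N. \<Sum>j<K. (cmod (F i j))^2 + (cmod (G i j))^2 - 2 * Re (F i j * cnj (G i j)))"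
    unfolding frame_dist_def vnorm2_def cmod_diff_sq by simp
  also have "\<dots> = (\<Sum>i<N. vnorm2 K (F i)) + (\<Sum>i<N. vnorm2 K (G i)) - 2 * Re (\<Sum>i<N. \<Sum>j<K. F i j * cnj (G i j))"
    by (simp add: vnorm2_def sum.distrib sum_subtractf sum_distrib_left Re_sum)
  also have "\<dots> = 2 * real K - 2 * Re (\<Sum>i<N. \<Sum>j<K. F i j * cnj (G i j))"
    using rows_sum[OF assms(1)] rows_sum[OF assms(2)] by simp
  finally show ?thesis .
qed

lemma dist_bound: assumes "isom N K F" "isom N K G"
  shows "frame_dist K N F G \<le> 4 * real K"
proof -
  have "frame_dist K N F G \<le> (\<Sum>i<N. \<Sum>j<K. 2 * (cmod (F i j))^2 + 2 * (cmod (G i j))^2)"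
    unfolding frame_dist_def vnorm2_def by (intro sum_mono cmod_diff_le)
  also have "\<dots> = 2 * (\<Sum>i<N. vnorm2 K (F i)) + 2 * (\<Sum>i<N. vnorm2 K (G i))"
    by (simp add: vnorm2_def sum.distrib sum_distrib_left)
  also have "\<dots> = 4 * real K" using rows_sum[OF assms(1)] rows_sum[OF assms(2)] by simp
  finally show ?thesis .
qed

lemma frame_dist_nonneg: "frame_dist K N F G \<ge> 0"
  unfolding frame_dist_def by (intro sum_nonneg vnorm2_nonneg)

definition Pm :: "nat \<Rightarrow> (nat \<Rightarrow> nat \<Rightarrow> complex) \<Rightarrow> nat \<Rightarrow> nat \<Rightarrow> complex" where
  "Pm K X i i' = (\<Sum>j<K. X i j * cnj (X i' j))"

lemma K1: assumes "isom N K X" "isom N K Y"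
  shows "(\<Sum>i<N. \<Sum>i'<N. (cmod (Pm K X i i' - Pm K Y i i'))^2) \<le> 4 * frame_dist K N X Y"
proof -
  define D where "D = (\<lambda>i j. X i j - Y i j)"
  have PX: "parseval_frame K N X" and PY: "parseval_frame K N Y" using assms isom_parseval by auto
  have eq: "Pm K X i i' - Pm K Y i i' = vinner K (D i) (X i') + cnj (vinner K (D i') (Y i))" for i i'
    unfolding Pm_def vinner_def D_def cnj_sum
    by (simp add: sum_subtractf[symmetric] sum.distrib[symmetric] algebra_simps)
  have "(\<Sum>i<N. \<Sum>i'<N. (cmod (Pm K X i i' - Pm K Y i i'))^2)
     \<le> (\<Sum>i<N. \<Sum>i'<N. 2 * (cmod (vinner K (D i) (X i')))^2 + 2 * (cmod (vinner K (D i') (Y i)))^2)"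
    unfolding eq by (intro sum_mono) (metis cmod_add_le complex_mod_cnj)
  also have "\<dots> = 2 * (\<Sum>i<N. \<Sum>i'<N. (cmod (vinner K (D i) (X i')))^2)
                 + 2 * (\<Sum>i<N. \<Sum>i'<N. (cmod (vinner K (D i') (Y i)))^2)"
    by (simp add: sum.distrib sum_distrib_left)
  also have "(\<Sum>i<N. \<Sum>i'<N. (cmod (vinner K (D i') (Y i)))^2) = (\<Sum>i'<N. \<Sum>i<N. (cmod (vinner K (D i') (Y i)))^2)"
    by (rule sum.swap)
  also have "\<dots> = (\<Sum>i'<N. vnorm2 K (D i'))" using PY unfolding parseval_frame_def by simp
  also have "(\<Sum>i<N. \<Sum>i'<N. (cmod (vinner K (D i) (X i')))^2) = (\<Sum>i<N. vnorm2 K (D i))"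
    using PX unfolding parseval_frame_def by simp
  also have "(\<Sum>i<N. vnorm2 K (D i)) = frame_dist K N X Y" unfolding frame_dist_def D_def by simp
  finally show ?thesis by simp
qed

lemma swap3: "(\<Sum>a\<in>A. \<Sum>b\<in>B. \<Sum>c\<in>C. g a b c) = (\<Sum>c\<in>C. \<Sum>a\<in>A. \<Sum>b\<in>B. (g a b c :: 'z::comm_monoid_add))"
proof -
  have "(\<Sum>a\<in>A. \<Sum>b\<in>B. \<Sum>c\<in>C. g a b c) = (\<Sum>a\<in>A. \<Sum>c\<in>C. \<Sum>b\<in>B. g a b c)"
    by (rule sum.cong[OF refl], rule sum.swap)
  also have "\<dots> = (\<Sum>c\<in>C. \<Sum>a\<in>A. \<Sum>b\<in>B. g a b c)" by (rule sum.swap)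
  finally show ?thesis .
qed

lemma swap4: "(\<Sum>a\<in>A. \<Sum>b\<in>B. \<Sum>c\<in>C. \<Sum>d\<in>D. f a b c d)
    = (\<Sum>d\<in>D. \<Sum>c\<in>C. \<Sum>a\<in>A. \<Sum>b\<in>B. (f a b c d :: 'z::comm_monoid_add))"
proof -
  have "(\<Sum>a\<in>A. \<Sum>b\<in>B. \<Sum>c\<in>C. \<Sum>d\<in>D. f a b c d) = (\<Sum>c\<in>C. \<Sum>a\<in>A. \<Sum>b\<in>B. \<Sum>d\<in>D. f a b c d)"
    by (rule swap3)
  also have "\<dots> = (\<Sum>c\<in>C. \<Sum>d\<in>D. \<Sum>a\<in>A. \<Sum>b\<in>B. f a b c d)"
    by (rule sum.cong[OF refl], rule swap3)
  also have "\<dots> = (\<Sum>d\<in>D. \<Sum>c\<in>C. \<Sum>a\<in>A. \<Sum>b\<in>B. f a b c d)" by (rule sum.swap)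
  finally show ?thesis .
qed

definition Am :: "nat \<Rightarrow> (nat \<Rightarrow> nat \<Rightarrow> complex) \<Rightarrow> (nat \<Rightarrow> nat \<Rightarrow> complex) \<Rightarrow> nat \<Rightarrow> nat \<Rightarrow> complex" where
  "Am N P P' p q = (\<Sum>i<N. P i q * cnj (P' i p))"

lemma K3: assumes "isom N K P" "isom N K P'"
  shows "(\<Sum>i<N. \<Sum>i'<N. (cmod (Pm K P i i' - Pm K P' i i'))^2)
       = 2 * real K - 2 * (\<Sum>p<K. \<Sum>q<K. (cmod (Am N P P' p q))^2)"
proof -
  have PP: "parseval_frame K N P" and PP': "parseval_frame K N P'" using assms isom_parseval by auto
  have n1: "(\<Sum>i<N. \<Sum>i'<N. (cmod (Pm K P i i'))^2) = real K"
  proof -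
    have "(\<Sum>i<N. \<Sum>i'<N. (cmod (Pm K P i i'))^2) = (\<Sum>i<N. vnorm2 K (P i))"
      using PP unfolding parseval_frame_def Pm_def vinner_def by simp
    thus ?thesis using rows_sum[OF assms(1)] by simp
  qed
  have n2: "(\<Sum>i<N. \<Sum>i'<N. (cmod (Pm K P' i i'))^2) = real K"
  proof -
    have "(\<Sum>i<N. \<Sum>i'<N. (cmod (Pm K P' i i'))^2) = (\<Sum>i<N. vnorm2 K (P' i))"
      using PP' unfolding parseval_frame_def Pm_def vinner_def by simp
    thus ?thesis using rows_sum[OF assms(2)] by simp
  qed
  have cross: "(\<Sum>i<N. \<Sum>i'<N. Pm K P i i' * cnj (Pm K P' i i'))
      = complex_of_real (\<Sum>p<K. \<Sum>q<K. (cmod (Am N P P' p q))^2)"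
  proof -
    have "(\<Sum>i<N. \<Sum>i'<N. Pm K P i i' * cnj (Pm K P' i i'))
        = (\<Sum>i<N. \<Sum>i'<N. \<Sum>q<K. \<Sum>p<K. P i q * cnj (P i' q) * (cnj (P' i p) * P' i' p))"
      unfolding Pm_def by (simp add: sum_product cnj_sum)
    also have "\<dots> = (\<Sum>p<K. \<Sum>q<K. \<Sum>i<N. \<Sum>i'<N. P i q * cnj (P i' q) * (cnj (P' i p) * P' i' p))"
      by (rule swap4)
    also have "\<dots> = (\<Sum>p<K. \<Sum>q<K. Am N P P' p q * cnj (Am N P P' p q))"
      unfolding Am_def by (simp add: sum_product cnj_sum mult_ac)
    also have "\<dots> = complex_of_real (\<Sum>p<K. \<Sum>q<K. (cmod (Am N P P' p q))^2)"
      by (simp add: of_real_sum cn2)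
    finally show ?thesis .
  qed
  have "(\<Sum>i<N. \<Sum>i'<N. (cmod (Pm K P i i' - Pm K P' i i'))^2)
     = (\<Sum>i<N. \<Sum>i'<N. (cmod (Pm K P i i'))^2) + (\<Sum>i<N. \<Sum>i'<N. (cmod (Pm K P' i i'))^2)
       - 2 * Re (\<Sum>i<N. \<Sum>i'<N. Pm K P i i' * cnj (Pm K P' i i'))"
    unfolding cmod_diff_sq by (simp add: sum.distrib sum_subtractf sum_distrib_left Re_sum)
  also have "\<dots> = 2 * real K - 2 * (\<Sum>p<K. \<Sum>q<K. (cmod (Am N P P' p q))^2)"
    unfolding n1 n2 cross Re_complex_of_real by simp
  finally show ?thesis .
qed



lemma le_sqrt_self: assumes "0 \<le> x" "x \<le> (1::real)" shows "x \<le> sqrt x"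
proof -
  have "sqrt x \<le> 1" using assms by simp
  hence "sqrt x * sqrt x \<le> sqrt x * 1" using assms by (intro mult_left_mono) auto
  thus ?thesis using assms by simp
qed

lemma K2: assumes PI: "isom N K P" and PI': "isom N K P'" and KN: "K \<le> N"
  shows "\<exists>P''. isom N K P'' \<and> (\<forall>i<N. vnorm2 K (P'' i) = vnorm2 K (P' i)) \<and>
     frame_dist K N P P'' \<le> 2 * real K - 2 * (\<Sum>p<K. \<Sum>q<K. (cmod (Am N P P' p q))^2)"
proof -
  define A where "A = Am N P P'"
  define H where "H = (\<lambda>q r. \<Sum>p<K. cnj (A p q) * A p r)"
  have herm: "\<forall>i<K. \<forall>j<K. H j i = cnj (H i j)" by (simp add: H_def cnj_sum mult.commute)
  obtain v ev where v: "onset K {..<K} v" and ev: "\<forall>a<K. \<forall>i<K. Hv K H (v a) i = ev a * v a i"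
    using spectral[OF herm] by blast
  have vo: "vinner K (v j) (v l) = (if j = l then 1 else 0)" if "j < K" "l < K" for j l
    using v that unfolding onset_def by auto
  define a where "a = (\<lambda>j p. \<Sum>q<K. A p q * v j q)"
  have k1: "vinner K (a j) (a l) = ev j * vinner K (v j) (v l)" if j: "j < K" for j l
  proof -
    have "vinner K (a j) (a l) = (\<Sum>p<K. \<Sum>q<K. \<Sum>r<K. A p q * v j q * (cnj (A p r) * cnj (v l r)))"
      unfolding vinner_def a_def by (simp add: sum_product cnj_sum)
    also have "\<dots> = (\<Sum>r<K. \<Sum>p<K. \<Sum>q<K. A p q * v j q * (cnj (A p r) * cnj (v l r)))"
      by (rule swap3)
    also have "\<dots> = (\<Sum>r<K. \<Sum>q<K. \<Sum>p<K. A p q * v j q * (cnj (A p r) * cnj (v l r)))"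
      by (rule sum.cong[OF refl], rule sum.swap)
    also have "\<dots> = (\<Sum>r<K. cnj (v l r) * Hv K H (v j) r)"
      unfolding Hv_def H_def by (simp add: sum_distrib_left sum_distrib_right mult_ac)
    also have "\<dots> = (\<Sum>r<K. cnj (v l r) * (ev j * v j r))"
      using ev j by simp
    also have "\<dots> = ev j * vinner K (v j) (v l)"
      unfolding vinner_def by (simp add: sum_distrib_left mult_ac)
    finally show ?thesis .
  qed
  define nn where "nn = (\<lambda>j. vnorm2 K (a j))"
  have evn: "ev j = complex_of_real (nn j)" if "j < K" for j
    using k1[OF that, of j] vo[OF that that] vinner_self[of K "a j"] unfolding nn_def by simp
  have ao: "vinner K (a j) (a l) = 0" if "j < K" "l < K" "j \<noteq> l" for j l
    using k1[OF that(1), of l] vo[OF that(1,2)] that(3) by simp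
  define S where "S = {j. j < K \<and> nn j > 0}"
  define c where "c = (\<lambda>j. complex_of_real (1 / sqrt (nn j)))"
  define u where "u = (\<lambda>j p. c j * a j p)"
  have cc: "c j * cnj (c j) * complex_of_real (nn j) = 1" if "j \<in> S" for j
  proof -
    have pos: "nn j > 0" using that S_def by auto
    have "c j * cnj (c j) * complex_of_real (nn j) = complex_of_real ((1 / sqrt (nn j)) * (1 / sqrt (nn j)) * nn j)"
      unfolding c_def by (simp only: complex_cnj_complex_of_real of_real_mult)
    also have "(1 / sqrt (nn j)) * (1 / sqrt (nn j)) * nn j = 1"
    proof -
      have "sqrt (nn j) * sqrt (nn j) = nn j" using pos by simp
      moreover have "sqrt (nn j) > 0" using pos by simp
      ultimately show ?thesis by (simp add: field_simps)
    qed
    finally show ?thesis by simp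
  qed
  have uon: "onset K S u" unfolding onset_def
  proof (intro ballI)
    fix j l assume jl: "j \<in> S" "l \<in> S"
    hence jlK: "j < K" "l < K" unfolding S_def by auto
    have "vinner K (u j) (u l) = c j * cnj (c l) * vinner K (a j) (a l)"
      unfolding u_def vinner_scale vinner_scale2 by simp
    also have "\<dots> = (if j = l then 1 else 0)"
    proof (cases "j = l")
      case True thus ?thesis using cc[OF jl(1)] jlK vinner_self[of K "a j"] unfolding nn_def by simp
    next
      case False thus ?thesis using ao[OF jlK False] by simp
    qed
    finally show "vinner K (u j) (u l) = (if j = l then 1 else 0)" .
  qed
  have SK: "S \<subseteq> {..<K}" unfolding S_def by auto
  have un: "S \<union> ({..<K} - S) = {..<K}" using SK by auto
  have fS: "finite S" using SK finite_subset by blast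
  have dj: "({..<K} - S) \<inter> S = {}" by auto
  have cardle: "card (S \<union> ({..<K} - S)) \<le> K" unfolding un by simp
  obtain w where w0: "onset K (S \<union> ({..<K} - S)) w" and wu: "\<forall>j\<in>S. w j = u j"
    using completion[OF _ fS dj cardle uon] by auto
  have w: "onset K {..<K} w" using w0 un by simp
  have k2: "vinner K (a j) (w j) = complex_of_real (sqrt (nn j))" if j: "j < K" for j
  proof (cases "j \<in> S")
    case True
    have "vinner K (a j) (w j) = cnj (c j) * vinner K (a j) (a j)"
      using wu True unfolding u_def by (simp add: vinner_scale2)
    also have "\<dots> = complex_of_real ((1 / sqrt (nn j)) * nn j)"
      unfolding c_def vinner_self nn_def by simp
    also have "(1 / sqrt (nn j)) * nn j = sqrt (nn j)"
    proof -
      have pos: "nn j > 0" using True S_def by auto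
      have "sqrt (nn j) * sqrt (nn j) = nn j" using pos by simp
      moreover have "sqrt (nn j) > 0" using pos by simp
      ultimately show ?thesis by (metis nonzero_mult_div_cancel_left order_less_irrefl divide_inverse
            inverse_eq_divide mult.commute times_divide_eq_left)
    qed
    finally show ?thesis .
  next
    case False
    hence z: "nn j = 0" using j vnorm2_nonneg[of K "a j"] unfolding S_def nn_def by auto
    hence "\<forall>p<K. a j p = 0" using vnorm2_zero unfolding nn_def by blast
    hence "vinner K (a j) (w j) = 0" unfolding vinner_def by simp
    thus ?thesis using z by simp
  qed
  define Vs where "Vs = (\<lambda>j q. cnj (v j q))"
  have VsI: "isom K K Vs"
  proof -
    have "isom K K (\<lambda>q j. v j q)" using v isom_onset by simp
    from isom_rows_cnj[OF this] show ?thesis unfolding Vs_def .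
  qed
  have WI: "isom K K (\<lambda>p j. w j p)" using w isom_onset by simp
  define U where "U = (\<lambda>p q. \<Sum>j<K. w j p * Vs j q)"
  have UI: "isom K K U" unfolding U_def by (rule isom_mult[OF WI VsI])
  define P'' where "P'' = (\<lambda>i q. \<Sum>p<K. P' i p * U p q)"
  have P''I: "isom N K P''" unfolding P''_def by (rule isom_mult[OF PI' UI])
  have rows: "\<forall>i<N. vnorm2 K (P'' i) = vnorm2 K (P' i)"
    unfolding P''_def using rownorm_pres[OF UI] by simp
  have X: "(\<Sum>i<N. \<Sum>q<K. P i q * cnj (P'' i q)) = (\<Sum>j<K. vinner K (a j) (w j))"
  proof -
    have "(\<Sum>i<N. \<Sum>q<K. P i q * cnj (P'' i q)) = (\<Sum>i<N. \<Sum>q<K. \<Sum>p<K. P i q * cnj (P' i p) * cnj (U p q))"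
      unfolding P''_def by (simp add: cnj_sum sum_distrib_left mult_ac)
    also have "\<dots> = (\<Sum>p<K. \<Sum>i<N. \<Sum>q<K. P i q * cnj (P' i p) * cnj (U p q))" by (rule swap3)
    also have "\<dots> = (\<Sum>p<K. \<Sum>q<K. \<Sum>i<N. P i q * cnj (P' i p) * cnj (U p q))"
      by (rule sum.cong[OF refl], rule sum.swap)
    also have "\<dots> = (\<Sum>p<K. \<Sum>q<K. A p q * cnj (U p q))"
      unfolding A_def Am_def by (simp add: sum_distrib_right)
    also have "\<dots> = (\<Sum>p<K. \<Sum>q<K. \<Sum>j<K. A p q * v j q * cnj (w j p))"
      unfolding U_def Vs_def by (simp add: cnj_sum sum_distrib_left mult_ac)
    also have "\<dots> = (\<Sum>j<K. \<Sum>p<K. \<Sum>q<K. A p q * v j q * cnj (w j p))" by (rule swap3)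
    also have "\<dots> = (\<Sum>j<K. vinner K (a j) (w j))"
      unfolding vinner_def a_def by (simp add: sum_distrib_right)
    finally show ?thesis .
  qed
  have ReX: "Re (\<Sum>i<N. \<Sum>q<K. P i q * cnj (P'' i q)) = (\<Sum>j<K. sqrt (nn j))"
    unfolding X using k2 by (simp add: Re_sum)
  have k3: "(\<Sum>j<K. nn j) = (\<Sum>p<K. \<Sum>q<K. (cmod (A p q))^2)"
  proof -
    have Pv: "parseval_frame K K Vs" using isom_parseval VsI by blast
    have "(\<Sum>j<K. nn j) = (\<Sum>j<K. \<Sum>p<K. (cmod (vinner K (\<lambda>q. A p q) (Vs j)))^2)"
      unfolding nn_def vnorm2_def a_def vinner_def Vs_def by simp
    also have "\<dots> = (\<Sum>p<K. \<Sum>j<K. (cmod (vinner K (\<lambda>q. A p q) (Vs j)))^2)" by (rule sum.swap)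
    also have "\<dots> = (\<Sum>p<K. vnorm2 K (\<lambda>q. A p q))" using Pv unfolding parseval_frame_def by simp
    finally show ?thesis unfolding vnorm2_def .
  qed
  have k4: "nn j \<le> 1" if j: "j < K" for j
  proof -
    define y where "y = (\<lambda>i. \<Sum>q<K. P i q * v j q)"
    have "a j p = vinner N y (\<lambda>i. P' i p)" for p
    proof -
      have "vinner N y (\<lambda>i. P' i p) = (\<Sum>i<N. \<Sum>q<K. P i q * v j q * cnj (P' i p))"
        unfolding vinner_def y_def by (simp add: sum_distrib_right)
      also have "\<dots> = (\<Sum>q<K. \<Sum>i<N. P i q * v j q * cnj (P' i p))" by (rule sum.swap)
      also have "\<dots> = a j p" unfolding a_def A_def Am_def by (simp add: sum_distrib_left sum_distrib_right mult_ac)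
      finally show ?thesis by simp
    qed
    hence "nn j = (\<Sum>p<K. (cmod (vinner N y (\<lambda>i. P' i p)))^2)" unfolding nn_def vnorm2_def by simp
    also have "\<dots> \<le> vnorm2 N y" by (rule bessel[OF PI' KN])
    also have "vnorm2 N y = vnorm2 K (v j)" unfolding y_def by (rule isom_norm[OF PI])
    also have "vnorm2 K (v j) = 1" using vo[OF j j] vinner_self[of K "v j"] by simp
    finally show ?thesis .
  qed
  have "frame_dist K N P P'' = 2 * real K - 2 * (\<Sum>j<K. sqrt (nn j))"
    using dist_formula[OF PI P''I] ReX by simp
  also have "\<dots> \<le> 2 * real K - 2 * (\<Sum>j<K. nn j)"
  proof -
    have "(\<Sum>j<K. nn j) \<le> (\<Sum>j<K. sqrt (nn j))"
      using k4 by (intro sum_mono le_sqrt_self) (auto simp: nn_def vnorm2_nonneg)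
    thus ?thesis by simp
  qed
  also have "\<dots> = 2 * real K - 2 * (\<Sum>p<K. \<Sum>q<K. (cmod (Am N P P' p q))^2)"
    unfolding k3 A_def ..
  finally show ?thesis using P''I rows by blast
qed



lemma cis_int_2pi: "cis (2 * pi * real_of_int m) = 1"
proof -
  have "cos (2 * pi * real_of_int m) = 1" by (rule cos_int_2pin)
  moreover have "sin (2 * pi * real_of_int m) = 0" using cos_one_sin_zero[OF calculation] .
  ultimately show ?thesis by (simp add: complex_eq_iff)
qed

lemma roots_sum: fixes N :: nat and d :: int
  assumes N: "N > 0" and d: "d \<noteq> 0" "\<bar>d\<bar> < int N"
  shows "(\<Sum>i<N. cis (2 * pi * real_of_int d / real N) ^ i) = 0"
proof -
  define z where "z = cis (2 * pi * real_of_int d / real N)"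
  have zN: "z ^ N = 1" unfolding z_def DeMoivre using N by (simp add: cis_int_2pi)
  have z1: "z \<noteq> 1"
  proof
    assume "z = 1"
    hence "cos (2 * pi * real_of_int d / real N) = 1" unfolding z_def by (metis cis.simps(1) one_complex.simps(1))
    then obtain k :: int where k: "2 * pi * real_of_int d / real N = real_of_int k * 2 * pi"
      using cos_one_2pi_int by blast
    hence "real_of_int d = real_of_int k * real N" using N by (simp add: field_simps)
    hence dk: "d = k * int N" by (metis of_int_eq_iff of_int_mult of_int_of_nat_eq)
    show False
    proof (cases "k = 0")
      case True thus False using dk d by simp
    next
      case False
      hence "\<bar>k\<bar> \<ge> 1" by simp
      hence "\<bar>k * int N\<bar> \<ge> int N" using N by (simp add: abs_mult mult_le_cancel_right1)
      thus False using dk d by simp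
    qed
  qed
  show ?thesis using geometric_sum[OF z1, of N] zN unfolding z_def by simp
qed

lemma harmonic: assumes N: "0 < N" and KN: "K \<le> N"
  shows "\<exists>G. parseval_frame K N G \<and> equal_norm K N G \<and> (\<forall>i<N. vnorm2 K (G i) = real K / real N)"
proof -
  define c where "c = complex_of_real (1 / sqrt (real N))"
  define G where "G = (\<lambda>i j. c * cis (2 * pi * real i * real j / real N))"
  have cc: "c * cnj c = 1 / real N" unfolding c_def using N
    by (simp flip: of_real_mult)
  have iso: "isom N K G" unfolding isom_def
  proof (intro allI impI)
    fix j l assume jl: "j < K" "l < K"
    define d where "d = int j - int l"
    have "(\<Sum>i<N. G i j * cnj (G i l)) = (\<Sum>i<N. c * cnj c * cis (2 * pi * real_of_int d / real N) ^ i)"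
    proof (intro sum.cong refl)
      fix i
      have "cis (2 * pi * real i * real j / real N) * cnj (cis (2 * pi * real i * real l / real N))
          = cis (2 * pi * real i * real j / real N - 2 * pi * real i * real l / real N)"
        by (simp add: cis_cnj cis_mult)
      also have "2 * pi * real i * real j / real N - 2 * pi * real i * real l / real N
           = real i * (2 * pi * real_of_int d / real N)" unfolding d_def using N by (simp add: field_simps)
      finally show "G i j * cnj (G i l) = c * cnj c * cis (2 * pi * real_of_int d / real N) ^ i"
        unfolding G_def DeMoivre by (simp add: mult_ac)
    qed
    also have "\<dots> = c * cnj c * (\<Sum>i<N. cis (2 * pi * real_of_int d / real N) ^ i)"
      by (simp add: sum_distrib_left)
    also have "\<dots> = (if j = l then 1 else 0)"
    proof (cases "j = l")
      case True thus ?thesis unfolding d_def cc using N by simp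
    next
      case False
      hence "d \<noteq> 0" "\<bar>d\<bar> < int N" using jl KN unfolding d_def by auto
      thus ?thesis using roots_sum[OF N] False by simp
    qed
    finally show "(\<Sum>i<N. G i j * cnj (G i l)) = (if j = l then 1 else 0)" .
  qed
  have rn: "vnorm2 K (G i) = real K / real N" for i
  proof -
    have "(cmod (G i j))^2 = 1 / real N" for j
    proof -
      have "cmod (G i j) = 1 / sqrt (real N)" unfolding G_def c_def using N by (simp add: norm_mult norm_divide)
      thus ?thesis using N by (simp add: power_divide)
    qed
    thus ?thesis unfolding vnorm2_def by simp
  qed
  show ?thesis using isom_parseval[OF iso] rn unfolding equal_norm_def by auto
qed



lemma diag_vn: "(\<Sum>j<K. X i j * cnj (X i j)) = complex_of_real (vnorm2 K (X i))"
  using vinner_self[of K "X i"] unfolding vinner_def .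

lemma rel_norm: assumes "(\<Sum>j<K1. X i j * cnj (X i j)) + (\<Sum>j<K2. Y i j * cnj (Y i j)) = 1"
  shows "vnorm2 K2 (Y i) = 1 - vnorm2 K1 (X i)"
proof -
  have "complex_of_real (vnorm2 K1 (X i) + vnorm2 K2 (Y i)) = complex_of_real 1"
    using assms unfolding diag_vn by simp
  hence "vnorm2 K1 (X i) + vnorm2 K2 (Y i) = 1" by (simp only: of_real_eq_iff)
  thus ?thesis by simp
qed

lemma lin_help: fixes x y u v c :: complex
  assumes "x + y = c" "u + v = c" shows "x - v = - (y - u)"
proof -
  have "x + y = u + v" using assms by simp
  thus ?thesis by (simp add: algebra_simps)
qed

lemma core:
  assumes MN: "M \<le> N" and PF: "parseval_frame M N F"
    and QI: "isom N (N - M) Q"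
    and rel: "\<forall>i<N. \<forall>i'<N. (\<Sum>j<M. F i j * cnj (F i' j)) + (\<Sum>j<N-M. Q i j * cnj (Q i' j)) = (if i = i' then 1 else 0)"
    and PG: "parseval_frame (N - M) N G'" and EG: "equal_norm (N - M) N G'"
  shows "\<exists>G. parseval_frame M N G \<and> equal_norm M N G \<and> frame_dist M N F G \<le> 4 * frame_dist (N - M) N Q G'"
proof -
  have FI: "isom N M F" using PF parseval_iff by blast
  have GI: "isom N (N - M) G'" using PG parseval_iff by blast
  have eq: "N - (N - M) = M" using MN by simp
  obtain R where RI: "isom N M R" and rel': "\<forall>i<N. \<forall>i'<N. (\<Sum>j<N-M. G' i j * cnj (G' i' j)) + (\<Sum>j<M. R i j * cnj (R i' j)) = (if i = i' then 1 else 0)"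
    using complement[OF GI, unfolded eq] by auto
  obtain G where GGI: "isom N M G" and rows: "\<forall>i<N. vnorm2 M (G i) = vnorm2 M (R i)"
    and dG: "frame_dist M N F G \<le> 2 * real M - 2 * (\<Sum>p<M. \<Sum>q<M. (cmod (Am N F R p q))^2)"
    using K2[OF FI RI MN] by blast
  have pm: "cmod (Pm M F i i' - Pm M R i i') = cmod (Pm (N - M) Q i i' - Pm (N - M) G' i i')"
    if ii: "i < N" "i' < N" for i i'
  proof -
    have a: "Pm M F i i' + Pm (N - M) Q i i' = (if i = i' then 1 else 0)"
      using rel ii unfolding Pm_def by blast
    have b: "Pm (N - M) G' i i' + Pm M R i i' = (if i = i' then 1 else 0)"
      using rel' ii unfolding Pm_def by blast
    have "Pm M F i i' - Pm M R i i' = - (Pm (N - M) Q i i' - Pm (N - M) G' i i')"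
      using lin_help[OF a b] .
    thus ?thesis by (simp only: norm_minus_cancel)
  qed
  have "frame_dist M N F G \<le> (\<Sum>i<N. \<Sum>i'<N. (cmod (Pm M F i i' - Pm M R i i'))^2)"
    using dG K3[OF FI RI] by simp
  also have "\<dots> = (\<Sum>i<N. \<Sum>i'<N. (cmod (Pm (N - M) Q i i' - Pm (N - M) G' i i'))^2)"
    using pm by simp
  also have "\<dots> \<le> 4 * frame_dist (N - M) N Q G'" by (rule K1[OF QI GI])
  finally have d: "frame_dist M N F G \<le> 4 * frame_dist (N - M) N Q G'" .
  have "equal_norm M N G" unfolding equal_norm_def
  proof (intro allI impI)
    fix i i' assume ii: "i < N" "i' < N"
    have "vnorm2 M (R i) = 1 - vnorm2 (N - M) (G' i)" using rel' ii by (intro rel_norm) auto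
    moreover have "vnorm2 M (R i') = 1 - vnorm2 (N - M) (G' i')" using rel' ii by (intro rel_norm) auto
    moreover have "vnorm2 (N - M) (G' i) = vnorm2 (N - M) (G' i')" using EG ii unfolding equal_norm_def by blast
    ultimately show "vnorm2 M (G i) = vnorm2 M (G i')" using rows ii by simp
  qed
  thus ?thesis using d GGI parseval_iff by blast
qed



lemma alg1: fixes r n m e :: real assumes "r > 0" "n > 0" "n = m + r"
  shows "(1 - e * m / r) * r / n = 1 - (1 + e) * m / n"
proof -
  have "(1 - e * m / r) * r = r - e * m" using assms(1) by (simp add: field_simps)
  hence "(1 - e * m / r) * r / n = (r - e * m) / n" by simp
  also have "\<dots> = (n - (1 + e) * m) / n" using assms(3) by (simp add: algebra_simps)
  also have "\<dots> = 1 - (1 + e) * m / n" using assms(2) by (simp add: diff_divide_distrib)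
  finally show ?thesis .
qed
lemma alg2: fixes r n m e :: real assumes "r > 0" "n > 0" "n = m + r"
  shows "(1 + e * m / r) * r / n = 1 - (1 - e) * m / n"
proof -
  have "(1 + e * m / r) * r = r + e * m" using assms(1) by (simp add: field_simps)
  hence "(1 + e * m / r) * r / n = (r + e * m) / n" by simp
  also have "\<dots> = (n - (1 - e) * m) / n" using assms(3) by (simp add: algebra_simps)
  also have "\<dots> = 1 - (1 - e) * m / n" using assms(2) by (simp add: diff_divide_distrib)
  finally show ?thesis .
qed
lemma alg3: fixes d k n :: real assumes "d \<ge> 0" "k \<ge> 0" "n \<ge> 0"
  shows "(1 - d) * k / n \<le> k / n" "k / n \<le> (1 + d) * k / n"
proof -
  have a: "(1 - d) * k \<le> k" "k \<le> (1 + d) * k" using assms by (auto simp: algebra_simps)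
  show "(1 - d) * k / n \<le> k / n" by (rule divide_right_mono[OF a(1) assms(3)])
  show "k / n \<le> (1 + d) * k / n" by (rule divide_right_mono[OF a(2) assms(3)])
qed

lemma eq_near: assumes "\<forall>i<N. vnorm2 K (G i) = real K / real N" "\<delta> \<ge> 0"
  shows "nearly_equal_norm \<delta> K N G"
  unfolding nearly_equal_norm_def
proof (intro allI impI)
  fix i assume "i < N"
  hence h: "vnorm2 K (G i) = real K / real N" using assms by simp
  show "(1 - \<delta>) * real K / real N \<le> vnorm2 K (G i) \<and> vnorm2 K (G i) \<le> (1 + \<delta>) * real K / real N"
    unfolding h using alg3[OF assms(2), of "real K" "real N"] by simp
qed

lemma near_compl:
  assumes MN: "M < N" and eps: "\<epsilon> > 0"
    and nF: "nearly_equal_norm \<epsilon> M N F"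
    and rn: "\<forall>i<N. vnorm2 (N - M) (Q i) = 1 - vnorm2 M (F i)"
  shows "nearly_equal_norm (\<epsilon> * real M / real (N - M)) (N - M) N Q"
  unfolding nearly_equal_norm_def
proof (intro allI impI)
  fix i assume i: "i < N"
  have b: "(1 - \<epsilon>) * real M / real N \<le> vnorm2 M (F i)" "vnorm2 M (F i) \<le> (1 + \<epsilon>) * real M / real N"
    using nF i unfolding nearly_equal_norm_def by auto
  have pos: "real N > 0" "real N > 0" using MN by auto
  have pos': "real (N - M) > 0" "real N = real M + real (N - M)" using MN by auto
  have e1: "(1 - \<epsilon> * real M / real (N - M)) * real (N - M) / real N = 1 - (1 + \<epsilon>) * real M / real N"
    by (rule alg1[OF pos'(1) pos(2) pos'(2)])
  have e2: "(1 + \<epsilon> * real M / real (N - M)) * real (N - M) / real N = 1 - (1 - \<epsilon>) * real M / real N"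
    by (rule alg2[OF pos'(1) pos(2) pos'(2)])
  show "(1 - \<epsilon> * real M / real (N - M)) * real (N - M) / real N \<le> vnorm2 (N - M) (Q i) \<and>
        vnorm2 (N - M) (Q i) \<le> (1 + \<epsilon> * real M / real (N - M)) * real (N - M) / real N"
    unfolding e1 e2 using rn i b by auto
qed

theorem theorem6p1:
  fixes M N :: nat and \<epsilon> :: real
  assumes "1 \<le> M" and "M < N" and "\<epsilon> > 0"
  shows "paulsen_F \<epsilon> M N \<le> 8 * paulsen_F (\<epsilon> * real M / real (N - M)) (N - M) N"
proof -
  define \<delta> where "\<delta> = \<epsilon> * real M / real (N - M)"
  define D1 where "D1 = (\<lambda>F. {frame_dist M N F G | G. parseval_frame M N G \<and> equal_norm M N G})"
  define D2 where "D2 = (\<lambda>X. {frame_dist (N - M) N X G | G. parseval_frame (N - M) N G \<and> equal_norm (N - M) N G})"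
  define S1 where "S1 = {Inf (D1 F) | F. parseval_frame M N F \<and> nearly_equal_norm \<epsilon> M N F}"
  define S2 where "S2 = {Inf (D2 X) | X. parseval_frame (N - M) N X \<and> nearly_equal_norm \<delta> (N - M) N X}"
  have L: "paulsen_F \<epsilon> M N = Sup S1" unfolding paulsen_F_def S1_def D1_def ..
  have R: "paulsen_F \<delta> (N - M) N = Sup S2" unfolding paulsen_F_def S2_def D2_def ..
  have N0: "N > 0" using assms by simp
  have MN: "M \<le> N" using assms by simp
  obtain H2 where H2: "parseval_frame (N - M) N H2" "equal_norm (N - M) N H2" "\<forall>i<N. vnorm2 (N - M) (H2 i) = real (N - M) / real N"
    using harmonic[OF N0, of "N - M"] by auto
  obtain H1 where H1: "parseval_frame M N H1" "equal_norm M N H1" "\<forall>i<N. vnorm2 M (H1 i) = real M / real N"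
    using harmonic[OF N0 MN] by auto
  have D2ne: "D2 X \<noteq> {}" for X using H2 unfolding D2_def by auto
  have D2bdd: "bdd_below (D2 X)" for X unfolding D2_def bdd_below_def
    using frame_dist_nonneg by blast
  have D1bdd: "bdd_below (D1 X)" for X unfolding D1_def bdd_below_def
    using frame_dist_nonneg by blast
  have D2nn: "Inf (D2 X) \<ge> 0" for X
    by (rule cInf_greatest[OF D2ne]) (auto simp: D2_def frame_dist_nonneg)
  have D2ub: "Inf (D2 X) \<le> 4 * real (N - M)" if "parseval_frame (N - M) N X" for X
  proof -
    have "Inf (D2 X) \<le> frame_dist (N - M) N X H2"
      by (rule cInf_lower[OF _ D2bdd]) (use H2 in \<open>auto simp: D2_def\<close>)
    also have "\<dots> \<le> 4 * real (N - M)"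
    proof -
      have "isom N (N - M) X" "isom N (N - M) H2" using that H2(1) parseval_iff by auto
      thus ?thesis by (rule dist_bound)
    qed
    finally show ?thesis .
  qed
  have S2bdd: "bdd_above S2"
    by (rule bdd_aboveI[where M="4 * real (N - M)"]) (auto simp: S2_def intro: D2ub)
  have main: "x \<le> 4 * Sup S2" if x: "x \<in> S1" for x
  proof -
    obtain F where F: "x = Inf (D1 F)" "parseval_frame M N F" "nearly_equal_norm \<epsilon> M N F"
      using x unfolding S1_def by auto
    have FI: "isom N M F" using F(2) parseval_iff by blast
    obtain Q where QI: "isom N (N - M) Q" and rel: "\<forall>i<N. \<forall>i'<N.
       (\<Sum>j<M. F i j * cnj (F i' j)) + (\<Sum>j<N-M. Q i j * cnj (Q i' j)) = (if i = i' then 1 else 0)"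
      using complement[OF FI MN] by blast
    have rn: "\<forall>i<N. vnorm2 (N - M) (Q i) = 1 - vnorm2 M (F i)"
    proof (intro allI impI)
      fix i assume i: "i < N"
      show "vnorm2 (N - M) (Q i) = 1 - vnorm2 M (F i)"
        using rel[rule_format, OF i i] by (intro rel_norm) simp
    qed
    have nQ: "nearly_equal_norm \<delta> (N - M) N Q" unfolding \<delta>_def
      by (rule near_compl[OF assms(2,3) F(3) rn])
    have PQ: "parseval_frame (N - M) N Q" using QI parseval_iff by blast
    have inS2: "Inf (D2 Q) \<in> S2" unfolding S2_def using PQ nQ by blast
    have "Inf (D1 F) \<le> 4 * Inf (D2 Q)"
    proof -
      have "Inf (D1 F) \<le> 4 * Inf (D2 Q) + e" if e: "e > 0" for e
      proof -
        have "Inf (D2 Q) < Inf (D2 Q) + e / 4" using e by simp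
        then obtain d where d: "d \<in> D2 Q" "d < Inf (D2 Q) + e / 4"
          using cInf_lessD[OF D2ne] by blast
        then obtain G' where G': "d = frame_dist (N - M) N Q G'" "parseval_frame (N - M) N G'" "equal_norm (N - M) N G'"
          unfolding D2_def by blast
        obtain G where G: "parseval_frame M N G" "equal_norm M N G" "frame_dist M N F G \<le> 4 * frame_dist (N - M) N Q G'"
          using core[OF MN F(2) QI rel G'(2,3)] by blast
        have "Inf (D1 F) \<le> frame_dist M N F G"
          by (rule cInf_lower[OF _ D1bdd]) (use G in \<open>auto simp: D1_def\<close>)
        also have "\<dots> \<le> 4 * d" using G(3) G'(1) by simp
        also have "\<dots> \<le> 4 * Inf (D2 Q) + e" using d(2) by simp
        finally show ?thesis .
      qed
      thus ?thesis by (rule field_le_epsilon)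
    qed
    also have "Inf (D2 Q) \<le> Sup S2" by (rule cSup_upper[OF inS2 S2bdd])
    finally show ?thesis using F(1) by simp
  qed
  have S1ne: "S1 \<noteq> {}"
  proof -
    have "nearly_equal_norm \<epsilon> M N H1" using eq_near H1(3) assms(3) by auto
    thus ?thesis unfolding S1_def using H1 by blast
  qed
  have S2nn: "Sup S2 \<ge> 0"
  proof -
    have "Inf (D2 H2) \<in> S2"
    proof -
      have "\<delta> \<ge> 0" unfolding \<delta>_def using assms by simp
      hence "nearly_equal_norm \<delta> (N - M) N H2" using eq_near H2(3) by auto
      thus ?thesis unfolding S2_def using H2 by blast
    qed
    hence "Inf (D2 H2) \<le> Sup S2" using cSup_upper S2bdd by blast
    thus ?thesis using D2nn[of H2] by linarith
  qed
  have "Sup S1 \<le> 4 * Sup S2" by (rule cSup_least[OF S1ne main])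
  also have "\<dots> \<le> 8 * Sup S2" using S2nn by simp
  finally show ?thesis unfolding L R[unfolded \<delta>_def] \<delta>_def .
qed


end
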